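(* Let $\lambda\ge1$, let $\varphi(z)=1+B_1z+B_2z^2+\cdots$ be as in the context, and let $f(z)=z+\sum_{n\ge2}a_nz^n\in\mathcal R_\Sigma(\lambda,\varphi)$. Then $|a_3-a_2^2|\le\dfrac{B_1}{2\lambda+1}$.
   Context: Let $\mathbb U=\{z\in\mathbb C:|z|<1\}$; $\Sigma$ is the class of $f(z)=z+\sum_{n\ge2}a_nz^n$ analytic and univalent in $\mathbb U$ whose inverse extends to an analytic univalent function $g=f^{-1}$ on $\mathbb U$. $F\prec G$ means $F=G\circ w$ for some analytic $w:\mathbb U\to\mathbb U$ with $w(0)=0$. $\varphi$ is analytic and univalent in $\mathbb U$ with $\Re\varphi>0$, $\varphi(0)=1$, $\varphi'(0)>0$, $\varphi(\mathbb U)$ starlike with respect to $1$ and symmetric with respect to the real axis, $\varphi(z)=1+B_1z+B_2z^2+\cdots$ with real $B_j$, $B_1>0$. $\mathcal R_\Sigma(\lambda,\varphi)$ is the set of $f\in\Sigma$ with $(1-\lambda)\frac{f(z)}{z}+\lambda f'(z)\prec\varphi(z)$ and $(1-\lambda)\frac{g(w)}{w}+\lambda g'(w)\prec\varphi(w)$, $g=f^{-1}$. *)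

theory Defs
  imports "HOL-Analysis.Analysis"
begin

definition coeff0 :: "(complex \<Rightarrow> complex) \<Rightarrow> nat \<Rightarrow> complex" where
  "coeff0 f n = (deriv ^^ n) f 0 / of_nat (fact n)"

definition subord :: "(complex \<Rightarrow> complex) \<Rightarrow> (complex \<Rightarrow> complex) \<Rightarrow> bool" where
  "subord F G \<longleftrightarrow> (\<exists>w. w holomorphic_on ball 0 1 \<and> w ` ball 0 1 \<subseteq> ball 0 1 \<and> w 0 = 0 \<and>
       (\<forall>z\<in>ball 0 1. F z = G (w z)))"

definition normalized_univalent :: "(complex \<Rightarrow> complex) \<Rightarrow> bool" where
  "normalized_univalent f \<longleftrightarrow> f holomorphic_on ball 0 1 \<and> inj_on f (ball 0 1) \<and> f 0 = 0 \<and> deriv f 0 = 1"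

definition inverse_extension :: "(complex \<Rightarrow> complex) \<Rightarrow> (complex \<Rightarrow> complex) \<Rightarrow> bool" where
  "inverse_extension f g \<longleftrightarrow> g holomorphic_on ball 0 1 \<and> inj_on g (ball 0 1) \<and>
     (\<forall>z\<in>ball 0 1. f z \<in> ball 0 1 \<longrightarrow> g (f z) = z)"

definition bi_univalent :: "(complex \<Rightarrow> complex) \<Rightarrow> bool" where
  "bi_univalent f \<longleftrightarrow> normalized_univalent f \<and> (\<exists>g. inverse_extension f g)"

text \<open>h(z)/z with its removable singularity at 0 filled in by h'(0).\<close>
definition quot0 :: "(complex \<Rightarrow> complex) \<Rightarrow> complex \<Rightarrow> complex" where
  "quot0 h z = (if z = 0 then deriv h 0 else h z / z)"

definition bazilevic_expr :: "real \<Rightarrow> (complex \<Rightarrow> complex) \<Rightarrow> complex \<Rightarrow> complex" where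
  "bazilevic_expr lam h z = (1 - of_real lam) * quot0 h z + of_real lam * deriv h z"

definition R_Sigma :: "real \<Rightarrow> (complex \<Rightarrow> complex) \<Rightarrow> (complex \<Rightarrow> complex) \<Rightarrow> bool" where
  "R_Sigma lam \<phi> f \<longleftrightarrow> bi_univalent f \<and>
     (\<exists>g. inverse_extension f g \<and> subord (bazilevic_expr lam f) \<phi> \<and> subord (bazilevic_expr lam g) \<phi>)"

definition admissible_phi :: "(complex \<Rightarrow> complex) \<Rightarrow> bool" where
  "admissible_phi \<phi> \<longleftrightarrow> \<phi> holomorphic_on ball 0 1 \<and> inj_on \<phi> (ball 0 1) \<and>
     (\<forall>z\<in>ball 0 1. Re (\<phi> z) > 0) \<and> \<phi> 0 = 1 \<and>
     deriv \<phi> 0 \<in> \<real> \<and> Re (deriv \<phi> 0) > 0 \<and>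
     (\<forall>x\<in>\<phi> ` ball 0 1. closed_segment 1 x \<subseteq> \<phi> ` ball 0 1) \<and>
     (\<forall>x\<in>\<phi> ` ball 0 1. cnj x \<in> \<phi> ` ball 0 1) \<and>
     (\<forall>n. coeff0 \<phi> n \<in> \<real>)"

end

theory Submission imports Defs "HOL-Complex_Analysis.Complex_Analysis" begin

lemma coeff0_fps: "coeff0 h n = fps_expansion h 0 $ n"
  by (simp add: coeff0_def fps_expansion_def)

lemma ball_exp: "h holomorphic_on ball 0 1 \<Longrightarrow> h has_fps_expansion fps_expansion h 0"
  by (rule has_fps_expansion_fps_expansion) auto

lemma compose_coeffs:
  assumes hp: "\<phi> holomorphic_on ball 0 1" and hw: "w holomorphic_on ball 0 1"
    and w0: "w 0 = 0"
  shows "coeff0 (\<phi> \<circ> w) 1 = coeff0 \<phi> 1 * coeff0 w 1"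
    and "coeff0 (\<phi> \<circ> w) 2 = coeff0 \<phi> 1 * coeff0 w 2 + coeff0 \<phi> 2 * (coeff0 w 1)^2"
proof -
  let ?P = "fps_expansion \<phi> 0" and ?W = "fps_expansion w 0"
  have W0: "?W $ 0 = 0" using w0 by (simp add: fps_expansion_def)
  have e: "(\<phi> \<circ> w) has_fps_expansion (?P oo ?W)"
    by (rule has_fps_expansion_compose[OF ball_exp[OF hp] ball_exp[OF hw] W0])
  have c: "coeff0 (\<phi> \<circ> w) n = (?P oo ?W) $ n" for n
    using fps_nth_fps_expansion[OF e, of n] by (simp add: coeff0_def)
  show "coeff0 (\<phi> \<circ> w) 1 = coeff0 \<phi> 1 * coeff0 w 1"
    by (subst c) (simp add: coeff0_fps fps_compose_nth W0)
  show "coeff0 (\<phi> \<circ> w) 2 = coeff0 \<phi> 1 * coeff0 w 2 + coeff0 \<phi> 2 * (coeff0 w 1)^2"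
    by (subst c) (simp add: coeff0_fps fps_compose_nth W0 numeral_2_eq_2 fps_mult_nth power2_eq_square)
qed

lemma baz_coeffs:
  assumes hh: "h holomorphic_on ball 0 1" and h0: "h 0 = 0"
    and hp: "p holomorphic_on ball 0 1"
    and eq: "\<And>z. z \<in> ball 0 1 \<Longrightarrow> p z = bazilevic_expr lam h z"
  shows "coeff0 p n = (1 + of_nat n * of_real lam) * coeff0 h (Suc n)"
proof -
  let ?P = "fps_expansion p 0" and ?H = "fps_expansion h 0"
  have e1: "(\<lambda>z. z * p z) has_fps_expansion fps_X * ?P"
    by (intro has_fps_expansion_mult has_fps_expansion_fps_X ball_exp[OF hp])
  have e2: "(\<lambda>z. (1 - of_real lam) * h z + of_real lam * (z * deriv h z)) has_fps_expansion
      fps_const (1 - of_real lam) * ?H + fps_const (of_real lam) * (fps_X * fps_deriv ?H)"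
    by (intro has_fps_expansion_add has_fps_expansion_cmult_left has_fps_expansion_mult
        has_fps_expansion_fps_X has_fps_expansion_deriv ball_exp[OF hh])
  have ev: "eventually (\<lambda>z. z * p z = (1 - of_real lam) * h z + of_real lam * (z * deriv h z)) (nhds 0)"
  proof -
    have "eventually (\<lambda>z. z \<in> ball (0::complex) 1) (nhds 0)"
      by (intro eventually_nhds_in_open) auto
    then show ?thesis
    proof eventually_elim
      case (elim z)
      show ?case
      proof (cases "z = 0")
        case True then show ?thesis by (simp add: h0)
      next
        case False then show ?thesis using eq[OF elim]
          by (simp add: bazilevic_expr_def quot0_def field_simps)
      qed
    qed
  qed
  have "fps_X * ?P = fps_const (1 - of_real lam) * ?H + fps_const (of_real lam) * (fps_X * fps_deriv ?H)"
    using e1 e2 ev by (metis fps_expansion_unique_complex has_fps_expansion_cong)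
  then have "(fps_X * ?P) $ Suc n = (fps_const (1 - of_real lam) * ?H + fps_const (of_real lam) * (fps_X * fps_deriv ?H)) $ Suc n"
    by simp
  then show ?thesis unfolding coeff0_fps
    by (simp add: algebra_simps)
qed

lemma inverse_coeffs:
  assumes hf: "f holomorphic_on ball 0 1" and hg: "g holomorphic_on ball 0 1"
    and f0: "f 0 = 0" and f1: "coeff0 f 1 = 1"
    and inv: "\<And>z. z \<in> ball 0 1 \<Longrightarrow> f z \<in> ball 0 1 \<Longrightarrow> g (f z) = z"
  shows "coeff0 g 1 = 1" "coeff0 g 2 = - coeff0 f 2"
    "coeff0 g 3 = 2 * (coeff0 f 2)^2 - coeff0 f 3"
proof -
  let ?F = "fps_expansion f 0" and ?G = "fps_expansion g 0"
  have F0: "?F $ 0 = 0" using f0 by (simp add: fps_expansion_def)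
  have F1: "?F $ Suc 0 = 1" using f1 by (simp add: coeff0_fps)
  have e: "(g \<circ> f) has_fps_expansion (?G oo ?F)"
    by (rule has_fps_expansion_compose[OF ball_exp[OF hg] ball_exp[OF hf] F0])
  have cf: "continuous_on (ball 0 1) f" using hf holomorphic_on_imp_continuous_on by blast
  have "isCont f 0" using cf by (simp add: continuous_on_eq_continuous_at)
  then have "(f \<longlongrightarrow> 0) (at 0)" using f0 by (simp add: isCont_def)
  then have "eventually (\<lambda>z. f z \<in> ball 0 1) (at 0)"
    by (rule topological_tendstoD) auto
  then have evf: "eventually (\<lambda>z. f z \<in> ball 0 1) (nhds 0)"
    using f0 by (simp add: eventually_nhds_conv_at)
  have "eventually (\<lambda>z. z \<in> ball (0::complex) 1) (nhds 0)"
    by (intro eventually_nhds_in_open) auto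
  with evf have "eventually (\<lambda>z. (g \<circ> f) z = z) (nhds 0)"
    by eventually_elim (simp add: inv)
  then have "(\<lambda>z. z) has_fps_expansion (?G oo ?F)"
    using e has_fps_expansion_cong[of "g \<circ> f" "\<lambda>z. z"] by blast
  then have GF: "?G oo ?F = fps_X"
    using fps_expansion_unique_complex has_fps_expansion_fps_X by blast
  have c: "(?G oo ?F) $ n = fps_X $ n" for n using GF by simp
  have 1: "?G $ Suc 0 = 1" using c[of 1] by (simp add: fps_compose_nth F0 F1)
  have 2: "?G $ 2 = - ?F $ 2" using c[of 2] 1
    apply (simp add: fps_compose_nth F0 F1 numeral_2_eq_2 fps_mult_nth power2_eq_square)
    by (metis add.commute eq_neg_iff_add_eq_0)
  have 3: "?G $ 3 = 2 * (?F $ 2)^2 - ?F $ 3" using c[of 3] 1 2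
    apply (simp add: fps_compose_nth F0 F1 numeral_3_eq_3 numeral_2_eq_2 fps_mult_nth power2_eq_square)
    by (simp add: algebra_simps eq_diff_eq add_eq_0_iff2 del: add_eq_0_iff) 
  show "coeff0 g 1 = 1" "coeff0 g 2 = - coeff0 f 2"
    "coeff0 g 3 = 2 * (coeff0 f 2)^2 - coeff0 f 3"
    using 1 2 3 by (simp_all add: coeff0_fps)
qed

lemma schwarz_c2:
  assumes hw: "w holomorphic_on ball 0 1" and wb: "w ` ball 0 1 \<subseteq> ball 0 1"
  shows "cmod (coeff0 w 2) \<le> 1"
proof -
  have "z * cmod (coeff0 w 2) \<le> 1" if z: "0 < z" "z < 1" for z :: real
  proof -
    define r where "r = sqrt z"
    have r: "0 < r" "r < 1" "r^2 = z" using z by (auto simp: r_def real_sqrt_lt_1_iff)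
    have "cmod ((deriv ^^ 2) w 0) \<le> fact 2 * 1 / r^2"
    proof (rule Cauchy_inequality)
      show "w holomorphic_on ball 0 r" using r by (intro holomorphic_on_subset[OF hw]) auto
      show "continuous_on (cball 0 r) w"
        using hw r by (intro holomorphic_on_imp_continuous_on holomorphic_on_subset[OF hw]) auto
      show "cmod (w x) \<le> 1" if "cmod (0 - x) = r" for x
        using wb that r by (force simp: image_subset_iff)
    qed (use r in auto)
    then have "cmod (coeff0 w 2) \<le> 1 / z"
      using r by (simp add: coeff0_def norm_divide)
    then show ?thesis using z by (simp add: field_simps)
  qed
  then show ?thesis by (rule field_le_mult_one_interval)
qed

theorem corollary3p16:
  fixes lam :: real and \<phi> f :: "complex \<Rightarrow> complex"
  assumes "lam \<ge> 1"
    and "admissible_phi \<phi>"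
    and "R_Sigma lam \<phi> f"
  shows "cmod (coeff0 f 3 - (coeff0 f 2)\<^sup>2) \<le> Re (coeff0 \<phi> 1) / (2 * lam + 1)"
proof -
  from assms(3) obtain g where bi: "bi_univalent f" and ie: "inverse_extension f g"
    and sf: "subord (bazilevic_expr lam f) \<phi>" and sg: "subord (bazilevic_expr lam g) \<phi>"
    unfolding R_Sigma_def by blast
  from bi have hf: "f holomorphic_on ball 0 1" and f0: "f 0 = 0" and df: "deriv f 0 = 1"
    by (auto simp: bi_univalent_def normalized_univalent_def)
  from ie have hg: "g holomorphic_on ball 0 1" and inv: "\<And>z. z \<in> ball 0 1 \<Longrightarrow> f z \<in> ball 0 1 \<Longrightarrow> g (f z) = z"
    by (auto simp: inverse_extension_def)
  have g0: "g 0 = 0" using inv[of 0] f0 by simp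
  have hp: "\<phi> holomorphic_on ball 0 1" using assms(2) unfolding admissible_phi_def by blast
  have B1r: "coeff0 \<phi> 1 \<in> \<real>" using assms(2) unfolding admissible_phi_def by blast
  have B1p: "Re (deriv \<phi> 0) > 0" using assms(2) unfolding admissible_phi_def by blast
  have B1: "coeff0 \<phi> 1 = deriv \<phi> 0" by (simp add: coeff0_def)
  from sf obtain u where hu: "u holomorphic_on ball 0 1" and ub: "u ` ball 0 1 \<subseteq> ball 0 1"
    and u0: "u 0 = 0" and ueq: "\<And>z. z \<in> ball 0 1 \<Longrightarrow> bazilevic_expr lam f z = \<phi> (u z)"
    unfolding subord_def by blast
  from sg obtain v where hv: "v holomorphic_on ball 0 1" and vb: "v ` ball 0 1 \<subseteq> ball 0 1"
    and v0: "v 0 = 0" and veq: "\<And>z. z \<in> ball 0 1 \<Longrightarrow> bazilevic_expr lam g z = \<phi> (v z)"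
    unfolding subord_def by blast
  have hpu: "(\<phi> \<circ> u) holomorphic_on ball 0 1"
    by (rule holomorphic_on_compose_gen[OF hu hp ub])
  have hpv: "(\<phi> \<circ> v) holomorphic_on ball 0 1"
    by (rule holomorphic_on_compose_gen[OF hv hp vb])
  have pf: "coeff0 (\<phi> \<circ> u) n = (1 + of_nat n * of_real lam) * coeff0 f (Suc n)" for n
    by (rule baz_coeffs[OF hf f0 hpu]) (simp add: ueq)
  have pg: "coeff0 (\<phi> \<circ> v) n = (1 + of_nat n * of_real lam) * coeff0 g (Suc n)" for n
    by (rule baz_coeffs[OF hg g0 hpv]) (simp add: veq)
  have f1: "coeff0 f 1 = 1" using df by (simp add: coeff0_def)
  note gi = inverse_coeffs[OF hf hg f0 f1 inv]
  note cu = compose_coeffs[OF hp hu u0]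
  note cv = compose_coeffs[OF hp hv v0]
  define a2 where "a2 = coeff0 f 2"
  define a3 where "a3 = coeff0 f 3"
  define b1 where "b1 = coeff0 \<phi> 1"
  define b2 where "b2 = coeff0 \<phi> 2"
  define c1 where "c1 = coeff0 u 1"
  define c2 where "c2 = coeff0 u 2"
  define d1 where "d1 = coeff0 v 1"
  define d2 where "d2 = coeff0 v 2"
  define L where "L = (of_real lam :: complex)"
  have e1: "(1 + L) * a2 = b1 * c1"
    using pf[of 1] cu(1) by (simp add: a2_def b1_def c1_def L_def numeral_2_eq_2)
  have e2: "(1 + 2 * L) * a3 = b1 * c2 + b2 * c1^2"
    using pf[of 2] cu(2) by (simp add: a3_def b1_def b2_def c1_def c2_def L_def numeral_3_eq_3)
  have e3: "(1 + L) * (- a2) = b1 * d1"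
    using pg[of 1] cv(1) gi(2) by (simp add: a2_def b1_def d1_def L_def numeral_2_eq_2)
  have e4: "(1 + 2 * L) * (2 * a2^2 - a3) = b1 * d2 + b2 * d1^2"
    using pg[of 2] cv(2) gi(3) by (simp add: a2_def a3_def b1_def b2_def d1_def d2_def L_def numeral_3_eq_3)
  have b1nz: "b1 \<noteq> 0" using B1p B1 b1_def by auto
  have "b1 * d1 = - ((1 + L) * a2)" using e3 by simp
  also have "\<dots> = b1 * (- c1)" using e1 by simp
  finally have "b1 * d1 = b1 * (- c1)" .
  then have dc: "d1 = - c1" using b1nz mult_left_cancel by blast
  have Lr: "1 + 2 * L = of_real (1 + 2 * lam)" unfolding L_def by simp
  have L1: "1 + 2 * L \<noteq> 0" unfolding Lr of_real_eq_0_iff using assms(1) by linarith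
  have "2 * (1 + 2 * L) * (a3 - a2^2) = (1 + 2 * L) * a3 - (1 + 2 * L) * (2 * a2^2 - a3)"
    by (simp add: algebra_simps)
  also have "\<dots> = (b1 * c2 + b2 * c1^2) - (b1 * d2 + b2 * d1^2)" by (simp only: e2 e4)
  also have "\<dots> = b1 * (c2 - d2)" using dc by (simp add: algebra_simps)
  finally have H: "2 * (1 + 2 * L) * (a3 - a2^2) = b1 * (c2 - d2)" .
  have L2: "2 * (1 + 2 * L) \<noteq> 0" using L1 by (simp only: mult_eq_0_iff) simp
  have key: "a3 - a2^2 = b1 * (c2 - d2) / (2 * (1 + 2 * L))"
    using H L2 by (metis nonzero_mult_div_cancel_left)
  have nb1: "cmod b1 = Re (coeff0 \<phi> 1)"
    using B1r B1p B1 b1_def by (metis Reals_cases Re_complex_of_real abs_of_pos norm_of_real)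
  have nL: "cmod (2 * (1 + 2 * L)) = 2 * (2 * lam + 1)"
    unfolding Lr norm_mult norm_of_real using assms(1) by simp
  have ncd: "cmod (c2 - d2) \<le> 2"
    using schwarz_c2[OF hu ub] schwarz_c2[OF hv vb] norm_triangle_ineq4[of c2 d2]
    unfolding c2_def d2_def by linarith
  have "cmod (a3 - a2^2) = cmod b1 * cmod (c2 - d2) / (2 * (2 * lam + 1))"
    unfolding key norm_divide nL by (simp only: norm_mult)
  also have "\<dots> \<le> cmod b1 * 2 / (2 * (2 * lam + 1))"
    using assms(1) ncd by (intro divide_right_mono mult_left_mono) auto
  also have "\<dots> = Re (coeff0 \<phi> 1) / (2 * lam + 1)" unfolding nb1 using assms(1) by (simp add: field_simps)
  finally show ?thesis unfolding a2_def a3_def .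
qed

end
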